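(* Let $L$ be a finite lattice. If the only tolerances on $L$ are $\mathrm{id}_L$ and $L^2$, then $\mathsf{C}(L)=\mathsf{Pol}_{0,1}(L)$.
   Context: $L$ has bounds $0,1$; $\mathrm{id}_L=\{(x,x):x\in L\}$. An $n$-ary aggregation function on $L$ ($n\ge1$) is a nondecreasing map $A:L^n\to L$ with $A(0,\dots,0)=0$ and $A(1,\dots,1)=1$; $\mathsf{C}(L)$ is the set of all of them. Polynomials on $L$ are functions $L^n\to L$ built from projections and constants by finitely many pointwise joins and meets; $\mathsf{Pol}_{0,1}(L)$ is the set of polynomials preserving $0$ and $1$. A tolerance on $L$ is a reflexive, symmetric binary relation $T$ such that $(a,b),(c,d)\in T$ imply $(a\vee c,b\vee d),(a\wedge c,b\wedge d)\in T$. *)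

theory Defs
  imports Main
begin

text \<open>n-ary operations on a lattice are represented as functions on lists;
only their values on lists of length n matter.\<close>

definition tolerance :: "('a::lattice \<times> 'a) set \<Rightarrow> bool" where
  "tolerance T \<longleftrightarrow>
     (\<forall>x. (x, x) \<in> T) \<and>
     (\<forall>x y. (x, y) \<in> T \<longrightarrow> (y, x) \<in> T) \<and>
     (\<forall>a b c d. (a, b) \<in> T \<longrightarrow> (c, d) \<in> T \<longrightarrow>
        (sup a c, sup b d) \<in> T \<and> (inf a c, inf b d) \<in> T)"

definition aggregation :: "nat \<Rightarrow> ('a::bounded_lattice list \<Rightarrow> 'a) \<Rightarrow> bool" where
  "aggregation n A \<longleftrightarrow>
     (\<forall>xs ys. length xs = n \<longrightarrow> length ys = n \<longrightarrow>
        (\<forall>i<n. xs ! i \<le> ys ! i) \<longrightarrow> A xs \<le> A ys) \<and>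
     A (replicate n bot) = bot \<and> A (replicate n top) = top"

inductive polynomial :: "nat \<Rightarrow> ('a::lattice list \<Rightarrow> 'a) \<Rightarrow> bool" for n where
  proj: "i < n \<Longrightarrow> polynomial n (\<lambda>xs. xs ! i)"
| const: "polynomial n (\<lambda>xs. c)"
| join: "polynomial n f \<Longrightarrow> polynomial n g \<Longrightarrow> polynomial n (\<lambda>xs. sup (f xs) (g xs))"
| meet: "polynomial n f \<Longrightarrow> polynomial n g \<Longrightarrow> polynomial n (\<lambda>xs. inf (f xs) (g xs))"
| ext: "polynomial n f \<Longrightarrow> (\<forall>xs. length xs = n \<longrightarrow> g xs = f xs) \<Longrightarrow> polynomial n g"

definition pol01 :: "nat \<Rightarrow> ('a::bounded_lattice list \<Rightarrow> 'a) \<Rightarrow> bool" where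
  "pol01 n f \<longleftrightarrow> polynomial n f \<and> f (replicate n bot) = bot \<and> f (replicate n top) = top"

end

theory Submission
  imports Defs
begin

definition bigsup :: "'b list \<Rightarrow> ('b \<Rightarrow> 'a::bounded_lattice) \<Rightarrow> 'a" where
  "bigsup cs g = foldr (\<lambda>c acc. sup (g c) acc) cs bot"

definition biginf :: "'b list \<Rightarrow> ('b \<Rightarrow> 'a::bounded_lattice) \<Rightarrow> 'a" where
  "biginf cs g = foldr (\<lambda>c acc. inf (g c) acc) cs top"

lemma bigsup_le: "bigsup cs g \<le> x \<longleftrightarrow> (\<forall>c\<in>set cs. g c \<le> x)"
  by (induction cs) (auto simp: bigsup_def)

lemma le_bigsup: "c \<in> set cs \<Longrightarrow> g c \<le> bigsup cs g"
  by (induction cs) (auto simp: bigsup_def intro: le_supI2)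

lemma le_biginf: "x \<le> biginf cs g \<longleftrightarrow> (\<forall>c\<in>set cs. x \<le> g c)"
  by (induction cs) (auto simp: biginf_def)

lemma biginf_le: "c \<in> set cs \<Longrightarrow> biginf cs g \<le> g c"
  by (induction cs) (auto simp: biginf_def intro: le_infI2)

lemma biginf_top[simp]: "biginf cs (\<lambda>_. top) = top"
  by (induction cs) (auto simp: biginf_def)

lemma bigsup_poly:
  "(\<forall>c\<in>set cs. polynomial n (\<lambda>xs. g c xs)) \<Longrightarrow> polynomial n (\<lambda>xs::'a::bounded_lattice list. bigsup cs (\<lambda>c. g c xs))"
proof (induction cs)
  case Nil
  then show ?case by (simp add: bigsup_def polynomial.const)
next
  case (Cons c cs)
  then have "polynomial n (\<lambda>xs. sup (g c xs) (bigsup cs (\<lambda>c. g c xs)))"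
    by (intro polynomial.join) auto
  then show ?case by (simp add: bigsup_def)
qed

lemma biginf_poly:
  "(\<forall>c\<in>set cs. polynomial n (\<lambda>xs. g c xs)) \<Longrightarrow> polynomial n (\<lambda>xs::'a::bounded_lattice list. biginf cs (\<lambda>c. g c xs))"
proof (induction cs)
  case Nil
  then show ?case by (simp add: biginf_def polynomial.const)
next
  case (Cons c cs)
  then have "polynomial n (\<lambda>xs. inf (g c xs) (biginf cs (\<lambda>c. g c xs)))"
    by (intro polynomial.meet) auto
  then show ?case by (simp add: biginf_def)
qed

lemma poly_mono:
  assumes "polynomial n f"
  shows "length xs = n \<Longrightarrow> length ys = n \<Longrightarrow> (\<forall>i<n. xs ! i \<le> ys ! i) \<Longrightarrow> f xs \<le> f ys"
  using assms
proof (induction rule: polynomial.induct)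
  case (join f g)
  then show ?case by (meson le_supI1 le_supI2 sup.mono)
next
  case (meet f g)
  then show ?case by (meson inf_mono)
qed auto

lemma poly_subst:
  assumes "polynomial m p"
  shows "(\<forall>j<m. polynomial n (qs j)) \<Longrightarrow> polynomial n (\<lambda>xs. p (map (\<lambda>j. qs j xs) [0..<m]))"
  using assms
proof (induction rule: polynomial.induct)
  case (proj i)
  then have "(\<lambda>xs. map (\<lambda>j. qs j xs) [0..<m] ! i) = qs i" by auto
  then show ?case using proj by simp
next
  case (const c)
  then show ?case by (simp add: polynomial.const)
next
  case (join f g)
  then show ?case by (simp add: polynomial.join)
next
  case (meet f g)
  then show ?case by (simp add: polynomial.meet)
next
  case (ext f g)
  then have "(\<lambda>xs. g (map (\<lambda>j. qs j xs) [0..<m])) = (\<lambda>xs. f (map (\<lambda>j. qs j xs) [0..<m]))"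
    by auto
  then show ?case using ext by simp
qed

lemma key:
  assumes tol: "\<forall>T :: ('a::{finite, bounded_lattice} \<times> 'a) set.
             tolerance T \<longrightarrow> T = Id \<or> T = UNIV"
    and ab: "(a::'a) \<noteq> b"
  shows "\<exists>r. polynomial 2 r \<and> r [a, b] = bot \<and> r [b, a] = top"
proof -
  define T where "T = {(r [a, b], r [b, a]) | r. polynomial 2 (r :: 'a list \<Rightarrow> 'a)}"
  have "tolerance T"
    unfolding tolerance_def
  proof (intro conjI allI impI)
    fix x
    show "(x, x) \<in> T" unfolding T_def
      by (rule CollectI, rule exI[of _ "\<lambda>_. x"]) (auto intro: polynomial.const)
  next
    fix x y assume "(x, y) \<in> T"
    then obtain r where r: "polynomial 2 r" "x = r [a, b]" "y = r [b, a]" unfolding T_def by auto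
    define qs where "qs = (\<lambda>(j::nat) (ys::'a list). if j = 0 then ys ! 1 else ys ! 0)"
    have "polynomial 2 (\<lambda>xs. r (map (\<lambda>j. qs j xs) [0..<2]))"
      by (rule poly_subst[OF r(1)]) (auto simp: qs_def less_2_cases_iff intro: polynomial.proj)
    moreover have "\<And>xs. map (\<lambda>j. qs j xs) [0..<2] = [xs ! 1, xs ! 0]"
      by (simp add: qs_def upt_rec)
    ultimately have p: "polynomial 2 (\<lambda>xs. r [xs ! 1, xs ! 0])" by simp
    show "(y, x) \<in> T" unfolding T_def
      by (rule CollectI, rule exI[of _ "\<lambda>xs. r [xs ! 1, xs ! 0]"]) (use p r in auto)
  next
    fix x y z w assume "(x, y) \<in> T" "(z, w) \<in> T"
    then obtain r s where r: "polynomial 2 r" "x = r [a, b]" "y = r [b, a]"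
      and s: "polynomial 2 s" "z = s [a, b]" "w = s [b, a]" unfolding T_def by auto
    show "(sup x z, sup y w) \<in> T" unfolding T_def
      by (rule CollectI, rule exI[of _ "\<lambda>xs. sup (r xs) (s xs)"]) (use r s in \<open>auto intro: polynomial.join\<close>)
    show "(inf x z, inf y w) \<in> T" unfolding T_def
      by (rule CollectI, rule exI[of _ "\<lambda>xs. inf (r xs) (s xs)"]) (use r s in \<open>auto intro: polynomial.meet\<close>)
  qed
  moreover have "(a, b) \<in> T" unfolding T_def
    by (rule CollectI, rule exI[of _ "\<lambda>xs. xs ! 0"]) (auto intro: polynomial.proj)
  ultimately have "T = UNIV" using tol ab by blast
  then have "(bot, top) \<in> T" by simp
  then show ?thesis unfolding T_def by auto
qed

lemma upind:
  assumes tol: "\<forall>T :: ('a::{finite, bounded_lattice} \<times> 'a) set.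
             tolerance T \<longrightarrow> T = Id \<or> T = UNIV"
    and i: "i < n"
  shows "polynomial n (\<lambda>xs. if (a::'a) \<le> xs ! i then top else bot)"
proof -
  have "\<forall>y\<in>{y. \<not> a \<le> y}. \<exists>r. polynomial 2 r \<and> r [inf y a, a] = bot \<and> r [a, inf y a] = top"
  proof
    fix y assume "y \<in> {y. \<not> a \<le> y}"
    then have "inf y a \<noteq> a" by (metis inf.cobounded1 mem_Collect_eq)
    then show "\<exists>r. polynomial 2 r \<and> r [inf y a, a] = bot \<and> r [a, inf y a] = top"
      using key[OF tol] by blast
  qed
  then obtain R where R: "\<And>y. \<not> a \<le> y \<Longrightarrow> polynomial 2 (R y) \<and> R y [inf y a, a] = bot \<and> R y [a, inf y a] = top"
    by (metis mem_Collect_eq)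
  obtain ys where ys: "set ys = {y. \<not> a \<le> y}" using finite_list[of "{y::'a. \<not> a \<le> y}"] by auto
  define Q where "Q = (\<lambda>y (xs::'a list). R y [inf (xs ! i) a, inf y a])"
  have Qp: "polynomial n (Q y)" if "\<not> a \<le> y" for y
  proof -
    define qs where "qs = (\<lambda>(j::nat) (xs::'a list). if j = 0 then inf (xs ! i) a else inf y a)"
    have "polynomial n (\<lambda>xs. R y (map (\<lambda>j. qs j xs) [0..<2]))"
      by (rule poly_subst) (use R[OF that] i in \<open>auto simp: qs_def less_2_cases_iff intro!: polynomial.meet polynomial.proj polynomial.const\<close>)
    moreover have "\<And>xs. map (\<lambda>j. qs j xs) [0..<2] = [inf (xs ! i) a, inf y a]"
      by (simp add: qs_def upt_rec)
    ultimately show ?thesis by (simp add: Q_def)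
  qed
  have P: "polynomial n (\<lambda>xs. biginf ys (\<lambda>y. Q y xs))"
    by (rule biginf_poly) (use Qp ys in auto)
  show ?thesis
  proof (rule polynomial.ext[OF P], intro allI impI)
    fix xs :: "'a list" assume len: "length xs = n"
    show "(if a \<le> xs ! i then top else bot) = biginf ys (\<lambda>y. Q y xs)"
    proof (cases "a \<le> xs ! i")
      case True
      then have "inf (xs ! i) a = a" by (simp add: inf.absorb2)
      then have "\<forall>y\<in>set ys. Q y xs = top" using R ys by (auto simp: Q_def)
      then have "top \<le> biginf ys (\<lambda>y. Q y xs)" by (simp add: le_biginf)
      then show ?thesis using True by (simp add: top_unique)
    next
      case False
      let ?y = "xs ! i"
      have m: "R ?y [inf ?y a, inf ?y a] \<le> R ?y [inf ?y a, a]"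
        by (rule poly_mono[where n=2]) (use R[OF False] in \<open>auto simp: less_2_cases_iff\<close>)
      have "biginf ys (\<lambda>y. Q y xs) \<le> Q ?y xs" by (rule biginf_le) (use ys False in auto)
      also have "\<dots> \<le> bot" using m R[OF False] by (simp add: Q_def)
      finally show ?thesis using False by (simp add: bot_unique)
    qed
  qed
qed

theorem mainTheorem4:
  assumes "\<forall>T :: ('a::{finite, bounded_lattice} \<times> 'a) set.
             tolerance T \<longrightarrow> T = Id \<or> T = UNIV"
  shows "\<forall>n\<ge>1. \<forall>f :: 'a list \<Rightarrow> 'a. aggregation n f \<longleftrightarrow> pol01 n f"
proof (intro allI impI iffI)
  fix n :: nat and f :: "'a list \<Rightarrow> 'a"
  assume "pol01 n f"
  then show "aggregation n f" unfolding pol01_def aggregation_def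
    using poly_mono by blast
next
  fix n :: nat and f :: "'a list \<Rightarrow> 'a"
  assume agg: "aggregation n f"
  have fin: "finite {cs::'a list. length cs = n}"
    using finite_lists_length_eq[of "UNIV::'a set" n] by simp
  obtain css where css: "set css = {cs::'a list. length cs = n}" using finite_list[OF fin] by auto
  define G where "G = (\<lambda>cs (xs::'a list). inf (f cs) (biginf [0..<n] (\<lambda>i. if cs ! i \<le> xs ! i then top else bot)))"
  have Gp: "polynomial n (G cs)" for cs
    unfolding G_def
    by (intro polynomial.meet polynomial.const biginf_poly ballI upind[OF assms]) auto
  have P: "polynomial n (\<lambda>xs. bigsup css (\<lambda>cs. G cs xs))"
    by (rule bigsup_poly) (use Gp in auto)
  have "polynomial n f"
  proof (rule polynomial.ext[OF P], intro allI impI)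
    fix xs :: "'a list" assume len: "length xs = n"
    have "bigsup css (\<lambda>cs. G cs xs) \<le> f xs"
      unfolding bigsup_le
    proof
      fix cs assume "cs \<in> set css"
      then have lc: "length cs = n" using css by auto
      show "G cs xs \<le> f xs"
      proof (cases "\<forall>i<n. cs ! i \<le> xs ! i")
        case True
        then have "f cs \<le> f xs" using agg lc len unfolding aggregation_def by blast
        then show ?thesis unfolding G_def by (simp add: le_infI1)
      next
        case False
        then obtain i where "i < n" "\<not> cs ! i \<le> xs ! i" by auto
        then have bb: "biginf [0..<n] (\<lambda>i. if cs ! i \<le> xs ! i then top else bot) \<le> (bot::'a)"
          using biginf_le[of i "[0..<n]" "\<lambda>i. if cs ! i \<le> xs ! i then top else bot"] by simp
        show ?thesis unfolding G_def by (rule order_trans[OF le_infI2[OF bb] bot_least])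
      qed
    qed
    moreover have "f xs \<le> bigsup css (\<lambda>cs. G cs xs)"
    proof -
      have "G xs xs = f xs" unfolding G_def by simp
      moreover have "xs \<in> set css" using css len by auto
      ultimately show ?thesis using le_bigsup[of xs css "\<lambda>cs. G cs xs"] by simp
    qed
    ultimately show "f xs = bigsup css (\<lambda>cs. G cs xs)" by (rule antisym[rotated])
  qed
  then show "pol01 n f" using agg unfolding pol01_def aggregation_def by simp
qed

end
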